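(* For every natural number $\bar{q} > 1$ there exist two non-isomorphic bipartite graphs $G_\mathrm{b} = (L,R,E_\mathrm{b})$ and $G_\mathrm{e} = (L,R,E_\mathrm{e})$ on the same node sets, with the same left degree sequence, the same right degree sequence, and the same number of butterflies, $\beta(G_\mathrm{b}) = \beta(G_\mathrm{e})$, such that the following holds. Let $\langle \rho_1,\dots,\rho_z\rangle$ be any sequence of operations, where each $\rho_i$ is a $p_i$-BSO with $p_i \in \mathbb{N}^+$, such that applying $\rho_1,\dots,\rho_z$ successively to $G_\mathrm{b}$ yields $G_\mathrm{e}$, and such that every intermediate graph $G^i$ (obtained from $G_\mathrm{b}$ by applying $\rho_1,\dots,\rho_i$) has the same left and right degree sequences as $G_\mathrm{b}$ and $\beta(G^i) = \beta(G_\mathrm{b})$. Then there exists $\ell \in \{1,\dots,z\}$ with $p_\ell \ge \bar{q}$.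
   Context: A bipartite graph is a triple $G=(L,R,E)$ with $L,R$ disjoint finite node sets and $E \subseteq L\times R$; edges are undirected and written $(u,a)$ with $u\in L$, $a \in R$. $N_G(v)$ denotes the set of neighbors of $v$ and $\deg_G(v)=|N_G(v)|$. With fixed labelings $u_1,\dots,u_{|L|}$ of $L$ and $a_1,\dots,a_{|R|}$ of $R$, the left (right) degree sequence is $(\deg_G(u_1),\dots,\deg_G(u_{|L|}))$ (resp. $(\deg_G(a_1),\dots,\deg_G(a_{|R|}))$). A butterfly in $G$ is a set $\{u,v,a,b\}$ with $u\neq v \in L$, $a \neq b \in R$ and $\{(u,a),(u,b),(v,a),(v,b)\}\subseteq E$; $\beta(G)$ denotes the number of butterflies in $G$. For $q\in\mathbb{N}^+$, a $q$-edge bipartite swap operation ($q$-BSO) on $G$ is a pair $(S,\sigma)$ where $S=(e_1,\dots,e_q)$ is a vector of $q$ distinct edges $e_i=(u_i,a_i)\in E$ and $\sigma$ is a derangement of $\{1,\dots,q\}$ (a permutation with no fixed point) such that $(u_j,a_{\sigma(j)})\notin E$ for every $j$; applying it produces the graph $(L,R,(E\setminus S)\cup\{(u_j,a_{\sigma(j)}): 1\le j\le q\})$, which has the same left and right degree sequences as $G$. *)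

theory Defs
  imports Main "HOL-Combinatorics.Permutations"
begin

type_synonym node = nat
type_synonym bedges = "(node \<times> node) set"

definition bip_graph :: "node set \<Rightarrow> node set \<Rightarrow> bedges \<Rightarrow> bool" where
  "bip_graph L R E \<longleftrightarrow> finite L \<and> finite R \<and> L \<inter> R = {} \<and> E \<subseteq> L \<times> R"

definition nbrs :: "bedges \<Rightarrow> node \<Rightarrow> node set" where
  "nbrs E v = {w. (v, w) \<in> E \<or> (w, v) \<in> E}"

definition deg :: "bedges \<Rightarrow> node \<Rightarrow> nat" where
  "deg E v = card (nbrs E v)"

definition same_degrees :: "node set \<Rightarrow> node set \<Rightarrow> bedges \<Rightarrow> bedges \<Rightarrow> bool" where
  "same_degrees L R E1 E2 \<longleftrightarrow> (\<forall>u\<in>L. deg E1 u = deg E2 u) \<and> (\<forall>a\<in>R. deg E1 a = deg E2 a)"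

definition butterflies :: "node set \<Rightarrow> node set \<Rightarrow> bedges \<Rightarrow> node set set" where
  "butterflies L R E = {{u, v, a, b} | u v a b. u \<in> L \<and> v \<in> L \<and> u \<noteq> v \<and> a \<in> R \<and> b \<in> R \<and> a \<noteq> b
       \<and> (u, a) \<in> E \<and> (u, b) \<in> E \<and> (v, a) \<in> E \<and> (v, b) \<in> E}"

definition beta :: "node set \<Rightarrow> node set \<Rightarrow> bedges \<Rightarrow> nat" where
  "beta L R E = card (butterflies L R E)"

definition bip_iso :: "node set \<Rightarrow> node set \<Rightarrow> bedges \<Rightarrow> bedges \<Rightarrow> bool" where
  "bip_iso L R E1 E2 \<longleftrightarrow> (\<exists>f g. bij_betw f L L \<and> bij_betw g R R \<and>
      (\<forall>u\<in>L. \<forall>a\<in>R. (u, a) \<in> E1 \<longleftrightarrow> (f u, g a) \<in> E2))"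

text \<open>A q-edge bipartite swap operation (S, sigma) on E; indices are 0-based:
  S is a list of q distinct edges of E, sigma a derangement of {0..<q}.\<close>
definition is_bso :: "bedges \<Rightarrow> nat \<Rightarrow> (node \<times> node) list \<Rightarrow> (nat \<Rightarrow> nat) \<Rightarrow> bool" where
  "is_bso E q S \<sigma> \<longleftrightarrow> q > 0 \<and> length S = q \<and> distinct S \<and> set S \<subseteq> E \<and>
      \<sigma> permutes {..<q} \<and> (\<forall>j<q. \<sigma> j \<noteq> j) \<and>
      (\<forall>j<q. (fst (S ! j), snd (S ! \<sigma> j)) \<notin> E)"

definition bso_apply :: "bedges \<Rightarrow> (node \<times> node) list \<Rightarrow> (nat \<Rightarrow> nat) \<Rightarrow> bedges" where
  "bso_apply E S \<sigma> = (E - set S) \<union> {(fst (S ! j), snd (S ! \<sigma> j)) | j. j < length S}"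

end

theory Submission
  imports Defs
begin


definition NL :: "bedges \<Rightarrow> nat \<Rightarrow> nat set" where "NL E u = {r. (u,r) \<in> E}"
definition cls :: "nat set \<Rightarrow> bedges \<Rightarrow> nat set \<Rightarrow> nat set" where
  "cls L E P = {u\<in>L. NL E u = P}"
definition pairs :: "nat set \<Rightarrow> nat set set" where "pairs R = {P. P \<subseteq> R \<and> card P = 2}"

lemma deg_left:
  assumes "E \<subseteq> L \<times> R" "L \<inter> R = {}" "u \<in> L"
  shows "deg E u = card (NL E u)"
proof -
  have "nbrs E u = NL E u" using assms unfolding nbrs_def NL_def by blast
  thus ?thesis by (simp add: deg_def)
qed

lemma deg_right:
  assumes "E \<subseteq> L \<times> R" "L \<inter> R = {}" "r \<in> R"
  shows "deg E r = card {u\<in>L. r \<in> NL E u}"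
proof -
  have "nbrs E r = {u\<in>L. r \<in> NL E u}" using assms unfolding nbrs_def NL_def by blast
  thus ?thesis by (simp add: deg_def)
qed

lemma deg_right_sum:
  assumes "E \<subseteq> L \<times> R" "L \<inter> R = {}" "r \<in> R" "finite L" "finite R"
    and two: "\<forall>u\<in>L. card (NL E u) = 2"
  shows "deg E r = (\<Sum>P\<in>{P\<in>pairs R. r \<in> P}. card (cls L E P))"
proof -
  have "{u\<in>L. r \<in> NL E u} = (\<Union>P\<in>{P\<in>pairs R. r \<in> P}. cls L E P)"
  proof (intro equalityI subsetI)
    fix u assume u: "u \<in> {u\<in>L. r \<in> NL E u}"
    have "NL E u \<subseteq> R" using assms(1) u unfolding NL_def by blast
    hence "NL E u \<in> pairs R" using two u unfolding pairs_def by auto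
    thus "u \<in> (\<Union>P\<in>{P\<in>pairs R. r \<in> P}. cls L E P)" using u unfolding cls_def by auto
  qed (auto simp: cls_def)
  moreover have "card (\<Union>P\<in>{P\<in>pairs R. r \<in> P}. cls L E P) = (\<Sum>P\<in>{P\<in>pairs R. r \<in> P}. card (cls L E P))"
  proof (rule card_UN_disjoint)
    show "finite {P\<in>pairs R. r \<in> P}" using assms(5) unfolding pairs_def by auto
    show "\<forall>i\<in>{P \<in> pairs R. r \<in> P}. finite (cls L E i)" using assms(4) unfolding cls_def by auto
    show "\<forall>i\<in>{P \<in> pairs R. r \<in> P}. \<forall>j\<in>{P \<in> pairs R. r \<in> P}. i \<noteq> j \<longrightarrow> cls L E i \<inter> cls L E j = {}"
      unfolding cls_def by auto
  qed
  ultimately show ?thesis using deg_right[OF assms(1-3)] by simp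
qed

lemma beta_sum:
  assumes bg: "bip_graph L R E" and two: "\<forall>u\<in>L. card (NL E u) = 2"
  shows "beta L R E = (\<Sum>P\<in>pairs R. card (cls L E P) choose 2)"
proof -
  have fin: "finite L" "finite R" and dis: "L \<inter> R = {}" and sub: "E \<subseteq> L \<times> R"
    using bg unfolding bip_graph_def by auto
  define F where "F P = (\<lambda>B. B \<union> P) ` {B. B \<subseteq> cls L E P \<and> card B = 2}" for P
  have NLR: "NL E u \<subseteq> R" for u using sub unfolding NL_def by blast
  have eq: "butterflies L R E = (\<Union>P\<in>pairs R. F P)"
  proof (intro equalityI subsetI)
    fix X assume "X \<in> butterflies L R E"
    then obtain u v a b where X: "X = {u,v,a,b}" and h: "u \<in> L" "v \<in> L" "u \<noteq> v" "a \<in> R" "b \<in> R" "a \<noteq> b"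
       "(u, a) \<in> E" "(u, b) \<in> E" "(v, a) \<in> E" "(v, b) \<in> E"
      unfolding butterflies_def by blast
    have "{a,b} \<subseteq> NL E u" using h unfolding NL_def by auto
    moreover have "finite (NL E u)" using NLR fin finite_subset by blast
    ultimately have nu: "NL E u = {a,b}" using two h(1) h(6)
      by (metis card_2_iff card_subset_eq)
    have "{a,b} \<subseteq> NL E v" using h unfolding NL_def by auto
    moreover have "finite (NL E v)" using NLR fin finite_subset by blast
    ultimately have nv: "NL E v = {a,b}" using two h(2) h(6)
      by (metis card_2_iff card_subset_eq)
    have P: "{a,b} \<in> pairs R" using h unfolding pairs_def by auto
    have "{u,v} \<in> {B. B \<subseteq> cls L E {a,b} \<and> card B = 2}" using h nu nv unfolding cls_def by auto
    hence "X \<in> F {a,b}" unfolding F_def X by (auto intro!: image_eqI[where x="{u,v}"])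
    thus "X \<in> (\<Union>P\<in>pairs R. F P)" using P by blast
  next
    fix X assume "X \<in> (\<Union>P\<in>pairs R. F P)"
    then obtain P B where P: "P \<in> pairs R" and B: "B \<subseteq> cls L E P" "card B = 2" and X: "X = B \<union> P"
      unfolding F_def by blast
    obtain a b where ab: "P = {a,b}" "a \<noteq> b" using P unfolding pairs_def by (auto simp: card_2_iff)
    obtain u v where uv: "B = {u,v}" "u \<noteq> v" using B by (auto simp: card_2_iff)
    have "u \<in> L" "v \<in> L" "NL E u = P" "NL E v = P" using B uv unfolding cls_def by auto
    moreover have "a \<in> R" "b \<in> R" using P ab unfolding pairs_def by auto
    ultimately show "X \<in> butterflies L R E" unfolding butterflies_def X uv ab NL_def
      using uv ab by blast
  qed
  have "card (\<Union>P\<in>pairs R. F P) = (\<Sum>P\<in>pairs R. card (F P))"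
  proof (rule card_UN_disjoint)
    show "finite (pairs R)" using fin unfolding pairs_def by auto
    show "\<forall>i\<in>pairs R. finite (F i)" unfolding F_def
      using fin by (auto simp: cls_def intro!: finite_imageI)
    show "\<forall>i\<in>pairs R. \<forall>j\<in>pairs R. i \<noteq> j \<longrightarrow> F i \<inter> F j = {}"
    proof (intro ballI impI)
      fix i j assume ij: "i \<in> pairs R" "j \<in> pairs R" "i \<noteq> j"
      show "F i \<inter> F j = {}"
      proof (rule ccontr)
        assume "F i \<inter> F j \<noteq> {}"
        then obtain B1 B2 where "B1 \<subseteq> cls L E i" "B2 \<subseteq> cls L E j" "B1 \<union> i = B2 \<union> j"
          unfolding F_def by blast
        moreover have "cls L E i \<subseteq> L" "cls L E j \<subseteq> L" unfolding cls_def by auto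
        ultimately have "B1 \<subseteq> L" "B2 \<subseteq> L" by blast+
        moreover have "i \<subseteq> R" "j \<subseteq> R" using ij unfolding pairs_def by auto
        ultimately have "(B1 \<union> i) \<inter> R = i" "(B2 \<union> j) \<inter> R = j" using dis by blast+
        thus False using \<open>B1 \<union> i = B2 \<union> j\<close> ij(3) by metis
      qed
    qed
  qed
  moreover have "card (F P) = card (cls L E P) choose 2" if "P \<in> pairs R" for P
  proof -
    have "inj_on (\<lambda>B. B \<union> P) {B. B \<subseteq> cls L E P \<and> card B = 2}"
    proof (rule inj_onI)
      fix B1 B2 assume "B1 \<in> {B. B \<subseteq> cls L E P \<and> card B = 2}" "B2 \<in> {B. B \<subseteq> cls L E P \<and> card B = 2}"
        "B1 \<union> P = B2 \<union> P"
      moreover have "cls L E P \<subseteq> L" unfolding cls_def by auto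
      ultimately have "B1 \<subseteq> L" "B2 \<subseteq> L" by blast+
      moreover have "P \<subseteq> R" using that unfolding pairs_def by auto
      ultimately have "(B1 \<union> P) \<inter> L = B1" "(B2 \<union> P) \<inter> L = B2" using dis by blast+
      thus "B1 = B2" using \<open>B1 \<union> P = B2 \<union> P\<close> by metis
    qed
    hence "card (F P) = card {B. B \<subseteq> cls L E P \<and> card B = 2}" unfolding F_def by (rule card_image)
    also have "\<dots> = card (cls L E P) choose 2" using fin by (intro n_subsets) (auto simp: cls_def)
    finally show ?thesis .
  qed
  ultimately show ?thesis unfolding beta_def eq by simp
qed



lemma core_arith:
  fixes a1 a2 a3 a4 a5 a6 b1 b2 b3 b4 b5 b6 k q Q :: int
  assumes da: "a1+a3+a5 = 6*k" "a1+a6+a4 = 6*k" "a3+a6+a2 = 6*k" "a5+a4+a2 = 6*k"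
    and sa: "a1*(a1-1)+a2*(a2-1)+a3*(a3-1)+a4*(a4-1)+a5*(a5-1)+a6*(a6-1) = 36*k^2-12*k"
    and db: "b1+b3+b5 = 6*k" "b1+b6+b4 = 6*k" "b3+b6+b2 = 6*k" "b5+b4+b2 = 6*k"
    and sb: "b1*(b1-1)+b2*(b2-1)+b3*(b3-1)+b4*(b4-1)+b5*(b5-1)+b6*(b6-1) = 36*k^2-12*k"
    and a10: "a1 = 0" and b1nn: "b1 \<ge> 0"
    and cl: "\<bar>a1-b1\<bar> \<le> q" "\<bar>a3-b3\<bar> \<le> q" "\<bar>a5-b5\<bar> \<le> q"
    and qQ: "0 \<le> q" "q < Q" and kQ: "k = Q^2"
  shows "b1 = 0"
proof -
  have a2: "a2 = 0" and a56: "a5 = a6" and a34: "a3 = a4" using da a10 by linarith+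
  have YZ: "a3 + a5 = 6*k" using da a10 by linarith
  have "2*(a3*(a3-1)) + 2*(a5*(a5-1)) = 36*k^2-12*k" using sa a10 a2 a56 a34 by simp
  hence "2*(a3^2 + a5^2) - 2*(a3+a5) = 36*k^2-12*k" by (simp add: algebra_simps power2_eq_square)
  hence sq: "a3^2 + a5^2 = 18*k^2" using YZ by simp
  have "(a3 - a5)^2 = 2*(a3^2+a5^2) - (a3+a5)^2" by (simp add: algebra_simps power2_eq_square)
  also have "\<dots> = 0" using sq YZ by (simp add: power_mult_distrib)
  finally have "a3 = a5" by simp
  hence a3: "a3 = 3*k" and a5: "a5 = 3*k" using YZ by linarith+
  have b2: "b2 = b1" and b56: "b5 = b6" and b34: "b3 = b4" using db by linarith+
  define s where "s = b3 - 3*k"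
  define t where "t = b5 - 3*k"
  have xst: "b1 + s + t = 0" using db unfolding s_def t_def by linarith
  have "2*(b1*(b1-1)) + 2*(b3*(b3-1)) + 2*(b5*(b5-1)) = 36*k^2-12*k" using sb b2 b56 b34 by simp
  hence "2*(b1^2+b3^2+b5^2) - 2*(b1+b3+b5) = 36*k^2-12*k" by (simp add: algebra_simps power2_eq_square)
  hence sq2: "b1^2+b3^2+b5^2 = 18*k^2" using db by simp
  have "b3 = 3*k + s" "b5 = 3*k + t" unfolding s_def t_def by simp_all
  hence "b1^2 + (3*k+s)^2 + (3*k+t)^2 = 18*k^2" using sq2 by simp
  hence "b1^2 + s^2 + t^2 + 6*k*(s+t) = 0" by (simp add: algebra_simps power2_eq_square)
  moreover have "s + t = - b1" using xst by linarith
  ultimately have key: "b1^2 + s^2 + t^2 = 6*k*b1" by (simp add: algebra_simps)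
  show ?thesis
  proof (rule ccontr)
    assume "b1 \<noteq> 0"
    hence b1p: "b1 \<ge> 1" using b1nn by simp
    have kn: "k \<ge> 0" using kQ by simp
    have bq: "\<bar>b1\<bar> \<le> q" "\<bar>s\<bar> \<le> q" "\<bar>t\<bar> \<le> q" using cl a10 a3 a5 unfolding s_def t_def by auto
    have "b1^2 \<le> q^2" "s^2 \<le> q^2" "t^2 \<le> q^2" using bq qQ(1) by (metis abs_le_square_iff abs_of_nonneg order_trans)+
    hence "6*k*b1 \<le> 3*q^2" using key by linarith
    moreover have "q^2 < Q^2" using qQ by (simp add: power_strict_mono)
    moreover have "6*k*1 \<le> 6*k*b1" using b1p kn by (intro mult_left_mono) auto
    ultimately have "6*k \<le> 3*q^2" "q^2 < k" using kQ by linarith+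
    thus False using kn by linarith
  qed
qed


lemma bso_sub:
  assumes "E \<subseteq> L \<times> R" "is_bso E q S \<sigma>"
  shows "bso_apply E S \<sigma> \<subseteq> L \<times> R"
proof -
  have "(fst (S ! j), snd (S ! \<sigma> j)) \<in> L \<times> R" if j: "j < length S" for j
  proof -
    have q: "length S = q" "\<sigma> permutes {..<q}" "set S \<subseteq> E" using assms(2) unfolding is_bso_def by auto
    have "\<sigma> j < q" using permutes_in_image[OF q(2)] j q(1) by auto
    hence "S ! \<sigma> j \<in> E" "S ! j \<in> E" using q j nth_mem by (metis subsetD)+
    thus ?thesis using assms(1) by (auto simp: mem_Times_iff)
  qed
  thus ?thesis using assms(1) unfolding bso_apply_def by blast
qed

lemma bso_NL:
  assumes "u \<notin> fst ` set S"
  shows "NL (bso_apply E S \<sigma>) u = NL E u"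
proof -
  have "(u, w) \<notin> set S" for w using assms by force
  moreover have "fst (S ! j) \<noteq> u" if "j < length S" for j using assms that by (metis image_eqI nth_mem)
  ultimately show ?thesis unfolding NL_def bso_apply_def by auto
qed

lemma cls_close:
  assumes "finite L" "finite U" "\<forall>u. u \<notin> U \<longrightarrow> NL E' u = NL E u"
  shows "card (cls L E' P) \<le> card (cls L E P) + card U"
proof -
  have "cls L E' P \<subseteq> cls L E P \<union> (U \<inter> L)" using assms(3) unfolding cls_def by auto
  hence "card (cls L E' P) \<le> card (cls L E P \<union> (U \<inter> L))"
    using assms(1) by (intro card_mono) (auto simp: cls_def)
  also have "\<dots> \<le> card (cls L E P) + card (U \<inter> L)" by (rule card_Un_le)
  also have "card (U \<inter> L) \<le> card U" using assms(2) by (intro card_mono) auto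
  finally show ?thesis by simp
qed

definition R4 :: "nat set" where "R4 = {0,1,2,3}"

lemma pairs4: "pairs R4 = {{0,1},{0,2},{0,3},{1,2},{1,3},{2,3}}"
proof (intro equalityI subsetI)
  fix P assume "P \<in> pairs R4"
  then obtain x y where "P = {x,y}" "x \<noteq> y" "x \<in> R4" "y \<in> R4" unfolding pairs_def by (auto simp: card_2_iff)
  thus "P \<in> {{0,1},{0,2},{0,3},{1,2},{1,3},{2,3}}" unfolding R4_def by (auto simp: insert_commute)
qed (auto simp: pairs_def R4_def)

abbreviation c :: "nat set \<Rightarrow> bedges \<Rightarrow> nat \<Rightarrow> nat \<Rightarrow> nat" where
  "c L E a b \<equiv> card (cls L E {a,b})"

lemma facts4:
  assumes bg: "bip_graph L R4 E" and two: "\<forall>u\<in>L. card (NL E u) = 2"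
  shows "deg E 0 = c L E 0 1 + c L E 0 2 + c L E 0 3"
    "deg E 1 = c L E 0 1 + c L E 1 2 + c L E 1 3"
    "deg E 2 = c L E 0 2 + c L E 1 2 + c L E 2 3"
    "deg E 3 = c L E 0 3 + c L E 1 3 + c L E 2 3"
    "beta L R4 E = (c L E 0 1 choose 2) + (c L E 0 2 choose 2) + (c L E 0 3 choose 2)
       + (c L E 1 2 choose 2) + (c L E 1 3 choose 2) + (c L E 2 3 choose 2)"
proof -
  have h: "E \<subseteq> L \<times> R4" "L \<inter> R4 = {}" "finite L" "finite R4" using bg unfolding bip_graph_def by auto
  have s0: "{P \<in> pairs R4. 0 \<in> P} = {{0,1},{0,2},{0,3}}" unfolding pairs4 by auto
  have s1: "{P \<in> pairs R4. 1 \<in> P} = {{0,1},{1,2},{1,3}}" unfolding pairs4 by auto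
  have s2: "{P \<in> pairs R4. 2 \<in> P} = {{0,2},{1,2},{2,3}}" unfolding pairs4 by auto
  have s3: "{P \<in> pairs R4. 3 \<in> P} = {{0,3},{1,3},{2,3}}" unfolding pairs4 by auto
  have r: "(0::nat) \<in> R4" "(1::nat) \<in> R4" "(2::nat) \<in> R4" "(3::nat) \<in> R4" unfolding R4_def by auto
  show "deg E 0 = c L E 0 1 + c L E 0 2 + c L E 0 3"
    using deg_right_sum[OF h(1,2) r(1) h(3,4) two] unfolding s0 by (simp add: doubleton_eq_iff)
  show "deg E 1 = c L E 0 1 + c L E 1 2 + c L E 1 3"
    using deg_right_sum[OF h(1,2) r(2) h(3,4) two] unfolding s1 by (simp add: doubleton_eq_iff)
  show "deg E 2 = c L E 0 2 + c L E 1 2 + c L E 2 3"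
    using deg_right_sum[OF h(1,2) r(3) h(3,4) two] unfolding s2 by (simp add: doubleton_eq_iff)
  show "deg E 3 = c L E 0 3 + c L E 1 3 + c L E 2 3"
    using deg_right_sum[OF h(1,2) r(4) h(3,4) two] unfolding s3 by (simp add: doubleton_eq_iff)
  show "beta L R4 E = (c L E 0 1 choose 2) + (c L E 0 2 choose 2) + (c L E 0 3 choose 2)
       + (c L E 1 2 choose 2) + (c L E 1 3 choose 2) + (c L E 2 3 choose 2)"
    using beta_sum[OF bg two] unfolding pairs4 by (simp add: doubleton_eq_iff add.assoc)
qed



definition LL :: "nat \<Rightarrow> nat set" where "LL k = {4..<4+12*k}"
definition prb :: "nat \<Rightarrow> nat \<Rightarrow> nat set" where
  "prb k u = (if u < 4+3*k then {0,2} else if u < 4+6*k then {1,3} else if u < 4+9*k then {0,3} else {1,2})"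
definition pre :: "nat \<Rightarrow> nat \<Rightarrow> nat set" where
  "pre k u = (if u < 4+k then {0,1} else if u < 4+2*k then {2,3} else if u < 4+3*k then {0,2}
     else if u < 4+4*k then {1,3} else if u < 4+8*k then {0,3} else {1,2})"
definition mkE :: "nat set \<Rightarrow> (nat \<Rightarrow> nat set) \<Rightarrow> bedges" where
  "mkE L p = {(u,r). u \<in> L \<and> r \<in> p u}"
definition Eb :: "nat \<Rightarrow> bedges" where "Eb k = mkE (LL k) (prb k)"
definition Ee :: "nat \<Rightarrow> bedges" where "Ee k = mkE (LL k) (pre k)"

lemma mkE_props:
  assumes "\<forall>u\<in>LL k. p u \<subseteq> R4 \<and> card (p u) = 2"
  shows "bip_graph (LL k) R4 (mkE (LL k) p)" "\<forall>u\<in>LL k. NL (mkE (LL k) p) u = p u"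
    "cls (LL k) (mkE (LL k) p) P = {u \<in> LL k. p u = P}"
proof -
  show "bip_graph (LL k) R4 (mkE (LL k) p)" using assms
    unfolding bip_graph_def LL_def R4_def mkE_def by auto
  show "\<forall>u\<in>LL k. NL (mkE (LL k) p) u = p u" unfolding NL_def mkE_def by auto
  thus "cls (LL k) (mkE (LL k) p) P = {u \<in> LL k. p u = P}" unfolding cls_def by auto
qed

lemma prb_ok: "\<forall>u\<in>LL k. prb k u \<subseteq> R4 \<and> card (prb k u) = 2"
  unfolding prb_def R4_def by auto
lemma pre_ok: "\<forall>u\<in>LL k. pre k u \<subseteq> R4 \<and> card (pre k u) = 2"
  unfolding pre_def R4_def by auto

lemmas Eb_props = mkE_props[OF prb_ok, folded Eb_def]
lemmas Ee_props = mkE_props[OF pre_ok, folded Ee_def]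

lemma Eb_cls:
  "c (LL k) (Eb k) 0 1 = 0" "c (LL k) (Eb k) 2 3 = 0"
  "c (LL k) (Eb k) 0 2 = 3*k" "c (LL k) (Eb k) 1 3 = 3*k"
  "c (LL k) (Eb k) 0 3 = 3*k" "c (LL k) (Eb k) 1 2 = 3*k"
proof -
  have X: "{u \<in> LL k. prb k u = {0,1}} = {}" unfolding LL_def prb_def by (auto simp: doubleton_eq_iff)
  show "c (LL k) (Eb k) 0 1 = 0" unfolding Eb_props(3) X by simp
  have X: "{u \<in> LL k. prb k u = {2,3}} = {}" unfolding LL_def prb_def by (auto simp: doubleton_eq_iff)
  show "c (LL k) (Eb k) 2 3 = 0" unfolding Eb_props(3) X by simp
  have X: "{u \<in> LL k. prb k u = {0,2}} = {4..<4+3*k}" unfolding LL_def prb_def by (auto simp: doubleton_eq_iff)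
  show "c (LL k) (Eb k) 0 2 = 3*k" unfolding Eb_props(3) X by simp
  have X: "{u \<in> LL k. prb k u = {1,3}} = {4+3*k..<4+6*k}" unfolding LL_def prb_def by (auto simp: doubleton_eq_iff)
  show "c (LL k) (Eb k) 1 3 = 3*k" unfolding Eb_props(3) X by simp
  have X: "{u \<in> LL k. prb k u = {0,3}} = {4+6*k..<4+9*k}" unfolding LL_def prb_def by (auto simp: doubleton_eq_iff)
  show "c (LL k) (Eb k) 0 3 = 3*k" unfolding Eb_props(3) X by simp
  have X: "{u \<in> LL k. prb k u = {1,2}} = {4+9*k..<4+12*k}" unfolding LL_def prb_def by (auto simp: doubleton_eq_iff)
  show "c (LL k) (Eb k) 1 2 = 3*k" unfolding Eb_props(3) X by simp
qed

lemma Ee_cls: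
  "c (LL k) (Ee k) 0 1 = k" "c (LL k) (Ee k) 2 3 = k"
  "c (LL k) (Ee k) 0 2 = k" "c (LL k) (Ee k) 1 3 = k"
  "c (LL k) (Ee k) 0 3 = 4*k" "c (LL k) (Ee k) 1 2 = 4*k"
proof -
  have X: "{u \<in> LL k. pre k u = {0,1}} = {4..<4+k}" unfolding LL_def pre_def by (auto simp: doubleton_eq_iff)
  show "c (LL k) (Ee k) 0 1 = k" unfolding Ee_props(3) X by simp
  have X: "{u \<in> LL k. pre k u = {2,3}} = {4+k..<4+2*k}" unfolding LL_def pre_def by (auto simp: doubleton_eq_iff)
  show "c (LL k) (Ee k) 2 3 = k" unfolding Ee_props(3) X by simp
  have X: "{u \<in> LL k. pre k u = {0,2}} = {4+2*k..<4+3*k}" unfolding LL_def pre_def by (auto simp: doubleton_eq_iff)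
  show "c (LL k) (Ee k) 0 2 = k" unfolding Ee_props(3) X by simp
  have X: "{u \<in> LL k. pre k u = {1,3}} = {4+3*k..<4+4*k}" unfolding LL_def pre_def by (auto simp: doubleton_eq_iff)
  show "c (LL k) (Ee k) 1 3 = k" unfolding Ee_props(3) X by simp
  have X: "{u \<in> LL k. pre k u = {0,3}} = {4+4*k..<4+8*k}" unfolding LL_def pre_def by (auto simp: doubleton_eq_iff)
  show "c (LL k) (Ee k) 0 3 = 4*k" unfolding Ee_props(3) X by simp
  have X: "{u \<in> LL k. pre k u = {1,2}} = {4+8*k..<4+12*k}" unfolding LL_def pre_def by (auto simp: doubleton_eq_iff)
  show "c (LL k) (Ee k) 1 2 = 4*k" unfolding Ee_props(3) X by simp
qed



lemma ch2: "2 * int (n choose 2) = int n * (int n - 1)"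
proof -
  have "even (n * (n - 1))" by (cases n) auto
  hence "2 * (n choose 2) = n * (n - 1)" by (simp add: choose_two)
  hence "int (2 * (n choose 2)) = int (n * (n - 1))" by simp
  thus ?thesis by (cases n) (auto simp: of_nat_diff algebra_simps)
qed

lemma LL_R4: "LL k \<inter> R4 = {}" "finite (LL k)" "finite R4"
  unfolding LL_def R4_def by auto

lemma Eb_sub: "Eb k \<subseteq> LL k \<times> R4" and Ee_sub: "Ee k \<subseteq> LL k \<times> R4"
  using Eb_props(1) Ee_props(1) unfolding bip_graph_def by auto

lemma Eb_two: "\<forall>u\<in>LL k. card (NL (Eb k) u) = 2" using Eb_props(2) prb_ok by simp
lemma Ee_two: "\<forall>u\<in>LL k. card (NL (Ee k) u) = 2" using Ee_props(2) pre_ok by simp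

lemma Eb_degs: "u \<in> LL k \<Longrightarrow> deg (Eb k) u = 2"
  "deg (Eb k) 0 = 6*k" "deg (Eb k) 1 = 6*k" "deg (Eb k) 2 = 6*k" "deg (Eb k) 3 = 6*k"
  "beta (LL k) R4 (Eb k) = 4 * (3*k choose 2)"
  using deg_left[OF Eb_sub LL_R4(1), of u] Eb_two
    facts4[OF Eb_props(1) Eb_two] Eb_cls by auto

lemma Ee_degs: "u \<in> LL k \<Longrightarrow> deg (Ee k) u = 2"
  "deg (Ee k) 0 = 6*k" "deg (Ee k) 1 = 6*k" "deg (Ee k) 2 = 6*k" "deg (Ee k) 3 = 6*k"
  "beta (LL k) R4 (Ee k) = 4 * (k choose 2) + 2 * (4*k choose 2)"
  using deg_left[OF Ee_sub LL_R4(1), of u] Ee_two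
    facts4[OF Ee_props(1) Ee_two] Ee_cls by auto

lemma beta_eq: "beta (LL k) R4 (Eb k) = beta (LL k) R4 (Ee k)"
proof -
  have "2 * int (beta (LL k) R4 (Eb k)) = 4 * (2 * int (3*k choose 2))" unfolding Eb_degs by simp
  also have "\<dots> = 4 * (int (3*k) * (int (3*k) - 1))" unfolding ch2 ..
  also have "\<dots> = 4 * (int k * (int k - 1)) + 2 * (int (4*k) * (int (4*k) - 1))" by (simp add: algebra_simps)
  also have "\<dots> = 4 * (2 * int (k choose 2)) + 2 * (2 * int (4*k choose 2))" unfolding ch2 ..
  also have "\<dots> = 2 * int (beta (LL k) R4 (Ee k))" unfolding Ee_degs by simp
  finally show ?thesis by simp
qed

lemma same_deg_EbEe: "same_degrees (LL k) R4 (Eb k) (Ee k)"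
  unfolding same_degrees_def using Eb_degs Ee_degs by (auto simp: R4_def)



lemma Ee_pos: "P \<in> pairs R4 \<Longrightarrow> k \<le> card (cls (LL k) (Ee k) P)"
  unfolding pairs4 using Ee_cls[of k] by auto

lemma not_iso: "k > 0 \<Longrightarrow> \<not> bip_iso (LL k) R4 (Eb k) (Ee k)"
proof
  assume k: "k > 0" and "bip_iso (LL k) R4 (Eb k) (Ee k)"
  then obtain f g where f: "bij_betw f (LL k) (LL k)" and g: "bij_betw g R4 R4"
    and e: "\<forall>u\<in>LL k. \<forall>a\<in>R4. (u, a) \<in> Eb k \<longleftrightarrow> (f u, g a) \<in> Ee k"
    unfolding bip_iso_def by blast
  have r01: "(0::nat) \<in> R4" "(1::nat) \<in> R4" unfolding R4_def by auto
  have g01: "g 0 \<in> R4" "g 1 \<in> R4" "g 0 \<noteq> g 1"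
    using g r01 unfolding bij_betw_def inj_on_def by (blast, blast, metis zero_neq_one)
  have pr: "{g 0, g 1} \<in> pairs R4" using g01 unfolding pairs_def by auto
  have "cls (LL k) (Ee k) {g 0, g 1} \<noteq> {}"
  proof -
    have "card (cls (LL k) (Ee k) {g 0, g 1}) > 0"
      using Ee_pos[OF pr, of k] k by linarith
    thus ?thesis by auto
  qed
  then obtain w where w: "w \<in> LL k" "NL (Ee k) w = {g 0, g 1}" unfolding cls_def by auto
  obtain u where u: "u \<in> LL k" "f u = w" using f w(1) unfolding bij_betw_def by (metis imageE)
  have "(f u, g 0) \<in> Ee k" "(f u, g 1) \<in> Ee k" using w u unfolding NL_def by auto
  hence "(u, 0) \<in> Eb k" "(u, 1) \<in> Eb k" using e u(1) r01 by blast+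
  hence "{0,1} \<subseteq> NL (Eb k) u" unfolding NL_def by auto
  moreover have "NL (Eb k) u = prb k u" using Eb_props(2) u(1) by auto
  ultimately have "{0,1} \<subseteq> prb k u" by simp
  thus False unfolding prb_def by (auto split: if_splits)
qed

lemma state:
  assumes sub: "E \<subseteq> LL k \<times> R4" and sd: "same_degrees (LL k) R4 E (Eb k)"
    and bt: "beta (LL k) R4 E = beta (LL k) R4 (Eb k)"
  shows "int (c (LL k) E 0 1) + int (c (LL k) E 0 2) + int (c (LL k) E 0 3) = 6 * int k"
    "int (c (LL k) E 0 1) + int (c (LL k) E 1 2) + int (c (LL k) E 1 3) = 6 * int k"
    "int (c (LL k) E 0 2) + int (c (LL k) E 1 2) + int (c (LL k) E 2 3) = 6 * int k"
    "int (c (LL k) E 0 3) + int (c (LL k) E 1 3) + int (c (LL k) E 2 3) = 6 * int k"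
    "int (c (LL k) E 0 1) * (int (c (LL k) E 0 1) - 1) + int (c (LL k) E 2 3) * (int (c (LL k) E 2 3) - 1)
     + int (c (LL k) E 0 2) * (int (c (LL k) E 0 2) - 1) + int (c (LL k) E 1 3) * (int (c (LL k) E 1 3) - 1)
     + int (c (LL k) E 0 3) * (int (c (LL k) E 0 3) - 1) + int (c (LL k) E 1 2) * (int (c (LL k) E 1 2) - 1)
     = 36 * (int k)^2 - 12 * int k"
proof -
  have bg: "bip_graph (LL k) R4 E" using sub LL_R4 unfolding bip_graph_def by auto
  have two: "\<forall>u\<in>LL k. card (NL E u) = 2"
  proof
    fix u assume u: "u \<in> LL k"
    have "card (NL E u) = deg E u" using deg_left[OF sub LL_R4(1) u] by simp
    also have "\<dots> = deg (Eb k) u" using sd u unfolding same_degrees_def by auto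
    also have "\<dots> = 2" using Eb_degs(1)[OF u] .
    finally show "card (NL E u) = 2" .
  qed
  note F = facts4[OF bg two]
  have r: "(0::nat) \<in> R4" "(1::nat) \<in> R4" "(2::nat) \<in> R4" "(3::nat) \<in> R4" unfolding R4_def by auto
  have d: "deg E 0 = 6*k" "deg E 1 = 6*k" "deg E 2 = 6*k" "deg E 3 = 6*k"
    using sd r Eb_degs(2-5) unfolding same_degrees_def by metis+
  show "int (c (LL k) E 0 1) + int (c (LL k) E 0 2) + int (c (LL k) E 0 3) = 6 * int k"
    using F(1) d(1) by linarith
  show "int (c (LL k) E 0 1) + int (c (LL k) E 1 2) + int (c (LL k) E 1 3) = 6 * int k"
    using F(2) d(2) by linarith
  show "int (c (LL k) E 0 2) + int (c (LL k) E 1 2) + int (c (LL k) E 2 3) = 6 * int k"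
    using F(3) d(3) by linarith
  show "int (c (LL k) E 0 3) + int (c (LL k) E 1 3) + int (c (LL k) E 2 3) = 6 * int k"
    using F(4) d(4) by linarith
  have "2 * int (beta (LL k) R4 E) = 4 * (2 * int (3*k choose 2))" using bt Eb_degs(6) by simp
  also have "\<dots> = 36 * (int k)^2 - 12 * int k" unfolding ch2 by (simp add: algebra_simps power2_eq_square)
  finally have "2 * int (beta (LL k) R4 E) = 36 * (int k)^2 - 12 * int k" .
  moreover have "2 * int (beta (LL k) R4 E) =
       2 * int (c (LL k) E 0 1 choose 2) + 2 * int (c (LL k) E 2 3 choose 2)
     + 2 * int (c (LL k) E 0 2 choose 2) + 2 * int (c (LL k) E 1 3 choose 2)
     + 2 * int (c (LL k) E 0 3 choose 2) + 2 * int (c (LL k) E 1 2 choose 2)" unfolding F(5) by simp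
  ultimately show "int (c (LL k) E 0 1) * (int (c (LL k) E 0 1) - 1) + int (c (LL k) E 2 3) * (int (c (LL k) E 2 3) - 1)
     + int (c (LL k) E 0 2) * (int (c (LL k) E 0 2) - 1) + int (c (LL k) E 1 3) * (int (c (LL k) E 1 3) - 1)
     + int (c (LL k) E 0 3) * (int (c (LL k) E 0 3) - 1) + int (c (LL k) E 1 2) * (int (c (LL k) E 1 2) - 1)
     = 36 * (int k)^2 - 12 * int k" unfolding ch2 by simp
qed

lemma step_close:
  assumes sub: "E \<subseteq> LL k \<times> R4" and b: "is_bso E q S \<sigma>" and E': "E' = bso_apply E S \<sigma>"
  shows "E' \<subseteq> LL k \<times> R4"
    "\<bar>int (card (cls (LL k) E P)) - int (card (cls (LL k) E' P))\<bar> \<le> int q"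
proof -
  show "E' \<subseteq> LL k \<times> R4" using bso_sub[OF sub b] E' by simp
  define U where "U = fst ` set S"
  have fU: "finite U" unfolding U_def by simp
  have "length S = q" using b unfolding is_bso_def by simp
  hence cU: "card U \<le> q" unfolding U_def by (metis card_image_le card_length finite_set order_trans)
  have nl: "\<forall>u. u \<notin> U \<longrightarrow> NL E' u = NL E u" using bso_NL E' unfolding U_def by simp
  have "card (cls (LL k) E' P) \<le> card (cls (LL k) E P) + card U"
    by (rule cls_close[OF LL_R4(2) fU nl])
  moreover have "card (cls (LL k) E P) \<le> card (cls (LL k) E' P) + card U"
    using nl by (intro cls_close[OF LL_R4(2) fU]) auto
  ultimately show "\<bar>int (card (cls (LL k) E P)) - int (card (cls (LL k) E' P))\<bar> \<le> int q"
    using cU by linarith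
qed

theorem theorem1:
  fixes qbar :: nat
  assumes "qbar > 1"
  shows "\<exists>L R Eb Ee. bip_graph L R Eb \<and> bip_graph L R Ee \<and> \<not> bip_iso L R Eb Ee \<and>
     same_degrees L R Eb Ee \<and> beta L R Eb = beta L R Ee \<and>
     (\<forall>(ops :: ((node \<times> node) list \<times> (nat \<Rightarrow> nat)) list) (G :: nat \<Rightarrow> bedges).
        G 0 = Eb \<longrightarrow> G (length ops) = Ee \<longrightarrow>
        (\<forall>i < length ops. is_bso (G i) (length (fst (ops ! i))) (fst (ops ! i)) (snd (ops ! i)) \<and>
                          G (Suc i) = bso_apply (G i) (fst (ops ! i)) (snd (ops ! i))) \<longrightarrow>
        (\<forall>i \<in> {1..length ops}. same_degrees L R (G i) Eb \<and> beta L R (G i) = beta L R Eb) \<longrightarrow>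
        (\<exists>l < length ops. length (fst (ops ! l)) \<ge> qbar))"
proof -
  define k where "k = qbar^2"
  have kpos: "k > 0" using assms unfolding k_def by simp
  have last: "\<exists>l < length ops. length (fst (ops ! l)) \<ge> qbar"
    if G0: "G 0 = Eb k" and Gl: "G (length ops) = Ee k"
      and st: "\<forall>i < length ops. is_bso (G i) (length (fst (ops ! i))) (fst (ops ! i)) (snd (ops ! i)) \<and>
                          G (Suc i) = bso_apply (G i) (fst (ops ! i)) (snd (ops ! i))"
      and inv: "\<forall>i \<in> {1..length ops}. same_degrees (LL k) R4 (G i) (Eb k) \<and> beta (LL k) R4 (G i) = beta (LL k) R4 (Eb k)"
    for ops :: "((node \<times> node) list \<times> (nat \<Rightarrow> nat)) list" and G
  proof (rule ccontr)
    assume "\<not> ?thesis"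
    hence small: "\<forall>l<length ops. length (fst (ops ! l)) < qbar" by auto
    have sdall: "same_degrees (LL k) R4 (G i) (Eb k) \<and> beta (LL k) R4 (G i) = beta (LL k) R4 (Eb k)"
      if "i \<le> length ops" for i
    proof (cases "i = 0")
      case True thus ?thesis using G0 unfolding same_degrees_def by simp
    next
      case False thus ?thesis using inv that by auto
    qed
    have P: "i \<le> length ops \<Longrightarrow> G i \<subseteq> LL k \<times> R4 \<and> c (LL k) (G i) 0 1 = 0" for i
    proof (induction i)
      case 0 thus ?case using G0 Eb_sub Eb_cls by simp
    next
      case (Suc i)
      hence i: "i < length ops" by simp
      with Suc.IH have IH: "G i \<subseteq> LL k \<times> R4" "c (LL k) (G i) 0 1 = 0" by auto
      define S where "S = fst (ops ! i)"
      define \<sigma> where "\<sigma> = snd (ops ! i)"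
      define q where "q = length S"
      have b: "is_bso (G i) q S \<sigma>" and GS: "G (Suc i) = bso_apply (G i) S \<sigma>"
        using st i unfolding S_def \<sigma>_def q_def by auto
      have qs: "q < qbar" using small i unfolding q_def S_def by auto
      note cl = step_close[OF IH(1) b GS]
      have A: "same_degrees (LL k) R4 (G i) (Eb k)" "beta (LL k) R4 (G i) = beta (LL k) R4 (Eb k)"
        using sdall[of i] i by auto
      have B: "same_degrees (LL k) R4 (G (Suc i)) (Eb k)" "beta (LL k) R4 (G (Suc i)) = beta (LL k) R4 (Eb k)"
        using sdall[of "Suc i"] Suc.prems by auto
      note sa = state[OF IH(1) A]
      note sb = state[OF cl(1) B]
      have "int (c (LL k) (G (Suc i)) 0 1) = 0"
      proof (rule core_arith[OF sa(1-4) sa(5) sb(1-4) sb(5)])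
        show "int (c (LL k) (G i) 0 1) = 0" using IH(2) by simp
        show "0 \<le> int (c (LL k) (G (Suc i)) 0 1)" by simp
        show "\<bar>int (c (LL k) (G i) 0 1) - int (c (LL k) (G (Suc i)) 0 1)\<bar> \<le> int q" by (rule cl(2))
        show "\<bar>int (c (LL k) (G i) 0 2) - int (c (LL k) (G (Suc i)) 0 2)\<bar> \<le> int q" by (rule cl(2))
        show "\<bar>int (c (LL k) (G i) 0 3) - int (c (LL k) (G (Suc i)) 0 3)\<bar> \<le> int q" by (rule cl(2))
        show "0 \<le> int q" by simp
        show "int q < int qbar" using qs by simp
        show "int k = (int qbar)^2" unfolding k_def by simp
      qed
      thus ?case using cl(1) by simp
    qed
    have "c (LL k) (G (length ops)) 0 1 = 0" using P by simp
    thus False using Gl Ee_cls(1)[of k] kpos by simp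
  qed
  show ?thesis
    apply (rule exI[of _ "LL k"], rule exI[of _ R4], rule exI[of _ "Eb k"], rule exI[of _ "Ee k"])
    using Eb_props(1) Ee_props(1) not_iso[OF kpos] same_deg_EbEe beta_eq last by blast
qed


end
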